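(* The proof system $\mathbf{DFD}$ is sound with respect to general relational models (every $\mathbf{DFD}$-provable formula is true at every state of every general relational model), and the proof system $\mathbf{DFD}^{\neq\emptyset}$ is sound with respect to general relational models of $\mathsf{DFD}^{\neq\emptyset}$.
   Context: Vocabulary: finite set $V$ of basic variables and predicate symbols with arities. Terms: $v\in V$, and $\bigcirc x$ for a term $x$. Formulas of $\mathcal{L}$: $P(x_1,\dots,x_k)$, $\neg\varphi$, $\varphi\wedge\psi$, $\bigcirc\varphi$, $\mathsf{D}_X\varphi$, $D_Xy$ ($X$ a finite, possibly empty, set of terms). $\mathcal{L}^{\neq\emptyset}$: sublanguage where all subscripts $X$ are non-empty. Abbreviations: $\bigcirc X=\{\bigcirc x:x\in X\}$, $D_XY:=\bigwedge_{y\in Y}D_Xy$ for finite $Y$, $\widehat{\mathsf{D}}_X=\neg\mathsf{D}_X\neg$. Proof system $\mathbf{DFD}$: all propositional tautologies and modus ponens; $\bigcirc(\varphi\to\psi)\to(\bigcirc\varphi\to\bigcirc\psi)$; $\bigcirc\neg\varphi\leftrightarrow\neg\bigcirc\varphi$; $\mathsf{D}_X(\varphi\to\psi)\to(\mathsf{D}_X\varphi\to\mathsf{D}_X\psi)$; $P(x_1,\dots,x_n)\to\mathsf{D}_{\{x_1,\dots,x_n\}}P(x_1,\dots,x_n)$; $D_Xy\to\mathsf{D}_XD_Xy$; $\mathsf{D}_X\varphi\to\varphi$; $\mathsf{D}_X\varphi\to\mathsf{D}_X\mathsf{D}_X\varphi$; $\neg\mathsf{D}_X\varphi\to\mathsf{D}_X\neg\mathsf{D}_X\varphi$;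 rule: from $\varphi$ infer $\mathsf{D}_X\varphi$; $D_Xx$ for $x\in X$; $D_XY\wedge D_YZ\to D_XZ$; $D_V\bigcirc v$ for $v\in V$; $D_XY\wedge\mathsf{D}_Y\varphi\to\mathsf{D}_X\varphi$; $\mathsf{D}_\emptyset\varphi\to\bigcirc\varphi$; $\bigcirc P(x_1,\dots,x_k)\leftrightarrow P(\bigcirc x_1,\dots,\bigcirc x_k)$; $\bigcirc\mathsf{D}_X\varphi\to\mathsf{D}_{\bigcirc X}\bigcirc\varphi$; $\bigcirc D_Xy\to D_{\bigcirc X}\bigcirc y$. $\mathbf{DFD}^{\neq\emptyset}$: the restriction of all axioms and rules of $\mathbf{DFD}$ to formulas of $\mathcal{L}^{\neq\emptyset}$, plus the rule: from $\varphi$ infer $\bigcirc\varphi$. A general relational model is $(W,g,=_X,\|\cdot\|)_X$: $W$ non-empty; $g:W\to W$; for each finite set $X$ of terms a binary relation $=_X$ on $W$; $\|\cdot\|$ maps atoms $P(x_1,\dots,x_n)$ and $D_Xy$ to subsets of $W$ (write $s\vDash\alpha$ for $s\in\|\alpha\|$, and $s\vDash D_XY$ iff $s\vDash D_Xy$ for all $y\in Y$), satisfying: (C1) $=_\emptyset$ is universal; (C2) each $=_X$ is an equivalence relation; (C3) $s\vDash D_Xx$ for $x\in X$; if $s\vDash D_XY$ and $s\vDash D_YZ$ then $s\vDash D_XZ$; $s\vDash D_V\bigcirc x$ for all terms $x$; (C4) if $s=_Xw$ and $s\vDash D_XY$ then $w\vDash D_XY$ and $s=_Yw$; (C5) if $s=_Xw$,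 $s\vDash P(x_1,\dots,x_n)$ with $x_i\in X$, then $w\vDash P(x_1,\dots,x_n)$; (C6) $s\vDash P(\bigcirc x_1,\dots,\bigcirc x_n)$ iff $g(s)\vDash P(x_1,\dots,x_n)$; (C7) if $s=_{\bigcirc X}w$ then $g(s)=_Xg(w)$; (C8) if $g(s)\vDash D_XY$ then $s\vDash D_{\bigcirc X}\bigcirc Y$. Truth: atoms via $\|\cdot\|$; Boolean as usual; $s\vDash\bigcirc\varphi$ iff $g(s)\vDash\varphi$; $s\vDash\mathsf{D}_X\varphi$ iff all $t$ with $s=_Xt$ satisfy $\varphi$. A general relational model of $\mathsf{DFD}^{\neq\emptyset}$ is the same but with relations $=_X$ and atoms $D_Xy$ only for non-empty $X$, condition C1 dropped, and C2–C8 required for non-empty sets only; it interprets $\mathcal{L}^{\neq\emptyset}$. *)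

theory Defs
  imports Main "HOL-Library.FSet"
begin

text \<open>Basic variables: the finite type 'v (the set V = UNIV). Predicate symbols: type 'p,
  with arities given by a parameter ar.\<close>

datatype 'v trm = Var 'v | Nxt "'v trm"

datatype ('v, 'p) fm =
    Pred 'p "'v trm list"
  | Neg "('v, 'p) fm"
  | Conj "('v, 'p) fm" "('v, 'p) fm"
  | Next "('v, 'p) fm"
  | Dbox "'v trm fset" "('v, 'p) fm"
  | Dep "'v trm fset" "'v trm"

definition imp :: "('v, 'p) fm \<Rightarrow> ('v, 'p) fm \<Rightarrow> ('v, 'p) fm" where
  "imp a b = Neg (Conj a (Neg b))"

definition iff :: "('v, 'p) fm \<Rightarrow> ('v, 'p) fm \<Rightarrow> ('v, 'p) fm" where
  "iff a b = Conj (imp a b) (imp b a)"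

text \<open>A fixed propositional truth constant (used for empty conjunctions); it lies in the
  non-empty-subscript fragment.\<close>
definition ftop :: "('v, 'p) fm" where
  "ftop = (let a = Dep {|Var undefined|} (Var undefined) in Neg (Conj a (Neg a)))"

fun conjs :: "('v, 'p) fm list \<Rightarrow> ('v, 'p) fm" where
  "conjs [] = ftop"
| "conjs [a] = a"
| "conjs (a # as) = Conj a (conjs as)"

text \<open>D_X Y for finite Y, given by an enumeration ys of Y.\<close>
definition DXY :: "'v trm fset \<Rightarrow> 'v trm list \<Rightarrow> ('v, 'p) fm" where
  "DXY X ys = conjs (map (Dep X) ys)"

definition Vset :: "('v::finite) trm fset" where
  "Vset = Abs_fset (range Var)"

fun wf :: "('p \<Rightarrow> nat) \<Rightarrow> ('v, 'p) fm \<Rightarrow> bool" where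
  "wf ar (Pred p xs) = (length xs = ar p)"
| "wf ar (Neg a) = wf ar a"
| "wf ar (Conj a b) = (wf ar a \<and> wf ar b)"
| "wf ar (Next a) = wf ar a"
| "wf ar (Dbox X a) = wf ar a"
| "wf ar (Dep X y) = True"

fun nes :: "('v, 'p) fm \<Rightarrow> bool" where
  "nes (Pred p xs) = True"
| "nes (Neg a) = nes a"
| "nes (Conj a b) = (nes a \<and> nes b)"
| "nes (Next a) = nes a"
| "nes (Dbox X a) = (X \<noteq> {||} \<and> nes a)"
| "nes (Dep X y) = (X \<noteq> {||})"

text \<open>Propositional evaluation treating non-Boolean formulas as atoms (for tautologies).\<close>
fun peval :: "(('v, 'p) fm \<Rightarrow> bool) \<Rightarrow> ('v, 'p) fm \<Rightarrow> bool" where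
  "peval v (Neg a) = (\<not> peval v a)"
| "peval v (Conj a b) = (peval v a \<and> peval v b)"
| "peval v a = v a"

inductive Ax :: "('v::finite, 'p) fm \<Rightarrow> bool" where
  taut: "(\<forall>v. peval v \<phi>) \<Longrightarrow> Ax \<phi>"
| kN: "Ax (imp (Next (imp \<phi> \<psi>)) (imp (Next \<phi>) (Next \<psi>)))"
| nN: "Ax (iff (Next (Neg \<phi>)) (Neg (Next \<phi>)))"
| kD: "Ax (imp (Dbox X (imp \<phi> \<psi>)) (imp (Dbox X \<phi>) (Dbox X \<psi>)))"
| pD: "Ax (imp (Pred p xs) (Dbox (fset_of_list xs) (Pred p xs)))"
| depD: "Ax (imp (Dep X y) (Dbox X (Dep X y)))"
| tD: "Ax (imp (Dbox X \<phi>) \<phi>)"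
| fourD: "Ax (imp (Dbox X \<phi>) (Dbox X (Dbox X \<phi>)))"
| fiveD: "Ax (imp (Neg (Dbox X \<phi>)) (Dbox X (Neg (Dbox X \<phi>))))"
| reflDep: "x |\<in>| X \<Longrightarrow> Ax (Dep X x)"
| transDep: "set ys = fset Y \<Longrightarrow> set zs = fset Z \<Longrightarrow>
     Ax (imp (Conj (DXY X ys) (DXY Y zs)) (DXY X zs))"
| vNext: "Ax (Dep Vset (Nxt (Var v)))"
| transfer: "set ys = fset Y \<Longrightarrow> Ax (imp (Conj (DXY X ys) (Dbox Y \<phi>)) (Dbox X \<phi>))"
| emptyNext: "Ax (imp (Dbox {||} \<phi>) (Next \<phi>))"
| nextPred: "Ax (iff (Next (Pred p xs)) (Pred p (map Nxt xs)))"
| nextD: "Ax (imp (Next (Dbox X \<phi>)) (Dbox (Nxt |`| X) (Next \<phi>)))"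
| nextDep: "Ax (imp (Next (Dep X y)) (Dep (Nxt |`| X) (Nxt y)))"

text \<open>Derivability; ne = True gives DFD with all axioms/rules restricted to the non-empty
  fragment plus the necessitation rule for the next-operator.\<close>
inductive DFDg :: "('p \<Rightarrow> nat) \<Rightarrow> bool \<Rightarrow> ('v::finite, 'p) fm \<Rightarrow> bool" for ar ne where
  ax: "Ax \<phi> \<Longrightarrow> wf ar \<phi> \<Longrightarrow> (ne \<longrightarrow> nes \<phi>) \<Longrightarrow> DFDg ar ne \<phi>"
| mp: "DFDg ar ne (imp \<phi> \<psi>) \<Longrightarrow> DFDg ar ne \<phi> \<Longrightarrow> DFDg ar ne \<psi>"
| necD: "DFDg ar ne \<phi> \<Longrightarrow> (ne \<longrightarrow> X \<noteq> {||}) \<Longrightarrow> DFDg ar ne (Dbox X \<phi>)"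
| necN: "ne \<Longrightarrow> DFDg ar ne \<phi> \<Longrightarrow> DFDg ar ne (Next \<phi>)"

definition DFD :: "('p \<Rightarrow> nat) \<Rightarrow> ('v::finite, 'p) fm \<Rightarrow> bool" where
  "DFD ar = DFDg ar False"

definition DFD_ne :: "('p \<Rightarrow> nat) \<Rightarrow> ('v::finite, 'p) fm \<Rightarrow> bool" where
  "DFD_ne ar = DFDg ar True"

text \<open>The set of states W is the (non-empty) type 'w.\<close>
record ('v, 'p, 'w) grm =
  g :: "'w \<Rightarrow> 'w"
  eqr :: "'v trm fset \<Rightarrow> 'w \<Rightarrow> 'w \<Rightarrow> bool"
  vP :: "'p \<Rightarrow> 'v trm list \<Rightarrow> 'w \<Rightarrow> bool"
  vD :: "'v trm fset \<Rightarrow> 'v trm \<Rightarrow> 'w \<Rightarrow> bool"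

definition dXY :: "('v, 'p, 'w) grm \<Rightarrow> 'w \<Rightarrow> 'v trm fset \<Rightarrow> 'v trm fset \<Rightarrow> bool" where
  "dXY M s X Y = (\<forall>y \<in> fset Y. vD M X y s)"

text \<open>ne = False: general relational model; ne = True: general relational model of
  DFD^{non-empty} (relations/atoms at the empty set are then irrelevant junk).\<close>
definition is_grm_gen :: "('p \<Rightarrow> nat) \<Rightarrow> bool \<Rightarrow> ('v::finite, 'p, 'w) grm \<Rightarrow> bool" where
  "is_grm_gen ar ne M \<longleftrightarrow>
    (let ok = (\<lambda>X. ne \<longrightarrow> X \<noteq> {||}) in
    (\<not> ne \<longrightarrow> (\<forall>s t. eqr M {||} s t)) \<and>
    (\<forall>X. ok X \<longrightarrow> equivp (eqr M X)) \<and>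
    (\<forall>X x s. ok X \<longrightarrow> x |\<in>| X \<longrightarrow> vD M X x s) \<and>
    (\<forall>X Y Z s. ok X \<longrightarrow> ok Y \<longrightarrow> ok Z \<longrightarrow> dXY M s X Y \<longrightarrow> dXY M s Y Z \<longrightarrow> dXY M s X Z) \<and>
    (\<forall>x s. vD M Vset (Nxt x) s) \<and>
    (\<forall>X Y s w. ok X \<longrightarrow> ok Y \<longrightarrow> eqr M X s w \<longrightarrow> dXY M s X Y \<longrightarrow>
        dXY M w X Y \<and> eqr M Y s w) \<and>
    (\<forall>X p xs s w. ok X \<longrightarrow> length xs = ar p \<longrightarrow> set xs \<subseteq> fset X \<longrightarrow> eqr M X s w \<longrightarrow>
        vP M p xs s \<longrightarrow> vP M p xs w) \<and>
    (\<forall>p xs s. length xs = ar p \<longrightarrow> (vP M p (map Nxt xs) s \<longleftrightarrow> vP M p xs (g M s))) \<and>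
    (\<forall>X s w. ok X \<longrightarrow> eqr M (Nxt |`| X) s w \<longrightarrow> eqr M X (g M s) (g M w)) \<and>
    (\<forall>X Y s. ok X \<longrightarrow> ok Y \<longrightarrow> dXY M (g M s) X Y \<longrightarrow> dXY M s (Nxt |`| X) (Nxt |`| Y)))"

definition is_grm :: "('p \<Rightarrow> nat) \<Rightarrow> ('v::finite, 'p, 'w) grm \<Rightarrow> bool" where
  "is_grm ar = is_grm_gen ar False"

definition is_grm_ne :: "('p \<Rightarrow> nat) \<Rightarrow> ('v::finite, 'p, 'w) grm \<Rightarrow> bool" where
  "is_grm_ne ar = is_grm_gen ar True"

fun sat :: "('v, 'p, 'w) grm \<Rightarrow> 'w \<Rightarrow> ('v, 'p) fm \<Rightarrow> bool" where
  "sat M s (Pred p xs) = vP M p xs s"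
| "sat M s (Neg a) = (\<not> sat M s a)"
| "sat M s (Conj a b) = (sat M s a \<and> sat M s b)"
| "sat M s (Next a) = sat M (g M s) a"
| "sat M s (Dbox X a) = (\<forall>t. eqr M X s t \<longrightarrow> sat M t a)"
| "sat M s (Dep X y) = vD M X y s"

end

theory Submission
  imports Defs
begin

lemma sat_imp[simp]: "sat M s (imp a b) = (sat M s a \<longrightarrow> sat M s b)"
  by (simp add: imp_def)

lemma sat_iff[simp]: "sat M s (iff a b) = (sat M s a \<longleftrightarrow> sat M s b)"
  by (auto simp add: iff_def)

lemma nes_imp[simp]: "nes (imp a b) = (nes a \<and> nes b)"
  by (simp add: imp_def)

lemma nes_iff[simp]: "nes (iff a b) = (nes a \<and> nes b)"
  by (auto simp add: iff_def)

lemma wf_imp[simp]: "wf ar (imp a b) = (wf ar a \<and> wf ar b)"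
  by (simp add: imp_def)

lemma wf_iff[simp]: "wf ar (iff a b) = (wf ar a \<and> wf ar b)"
  by (auto simp add: iff_def)

lemma sat_ftop[simp]: "sat M s ftop"
  by (simp add: ftop_def Let_def)

lemma sat_conjs: "sat M s (conjs xs) = (\<forall>a\<in>set xs. sat M s a)"
  by (induction xs rule: conjs.induct) auto

lemma nes_conjs: "nes (conjs xs) = (\<forall>a\<in>set xs. nes a)"
  by (induction xs rule: conjs.induct) (auto simp: ftop_def Let_def)

lemma sat_DXY: "set ys = fset Y \<Longrightarrow> sat M s (DXY X ys) = dXY M s X Y"
  by (auto simp: DXY_def sat_conjs dXY_def)

lemma nes_DXY: "nes (DXY X ys) = (ys = [] \<or> X \<noteq> {||})"
  by (auto simp: DXY_def nes_conjs)

lemma peval_sat: "peval (sat M s) \<phi> = sat M s \<phi>"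
  by (induction \<phi>) auto

lemma dXY_single: "dXY M s X {|y|} = vD M X y s"
  by (simp add: dXY_def)

lemma grmD:
  assumes "is_grm_gen ar ne M"
  shows C1: "\<not> ne \<Longrightarrow> eqr M {||} s t"
    and C2: "(ne \<longrightarrow> X \<noteq> {||}) \<Longrightarrow> equivp (eqr M X)"
    and C3a: "(ne \<longrightarrow> X \<noteq> {||}) \<Longrightarrow> x |\<in>| X \<Longrightarrow> vD M X x s"
    and C3b: "(ne \<longrightarrow> X \<noteq> {||}) \<Longrightarrow> (ne \<longrightarrow> Y \<noteq> {||}) \<Longrightarrow> (ne \<longrightarrow> Z \<noteq> {||}) \<Longrightarrow>
       dXY M s X Y \<Longrightarrow> dXY M s Y Z \<Longrightarrow> dXY M s X Z"
    and C3c: "vD M Vset (Nxt x) s"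
    and C4: "(ne \<longrightarrow> X \<noteq> {||}) \<Longrightarrow> (ne \<longrightarrow> Y \<noteq> {||}) \<Longrightarrow> eqr M X s w \<Longrightarrow> dXY M s X Y \<Longrightarrow>
        dXY M w X Y \<and> eqr M Y s w"
    and C5: "(ne \<longrightarrow> X \<noteq> {||}) \<Longrightarrow> length xs = ar p \<Longrightarrow> set xs \<subseteq> fset X \<Longrightarrow> eqr M X s w \<Longrightarrow>
        vP M p xs s \<Longrightarrow> vP M p xs w"
    and C6: "length xs = ar p \<Longrightarrow> (vP M p (map Nxt xs) s \<longleftrightarrow> vP M p xs (g M s))"
    and C7: "(ne \<longrightarrow> X \<noteq> {||}) \<Longrightarrow> eqr M (Nxt |`| X) s w \<Longrightarrow> eqr M X (g M s) (g M w)"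
    and C8: "(ne \<longrightarrow> X \<noteq> {||}) \<Longrightarrow> (ne \<longrightarrow> Y \<noteq> {||}) \<Longrightarrow> dXY M (g M s) X Y \<Longrightarrow> dXY M s (Nxt |`| X) (Nxt |`| Y)"
  using assms unfolding is_grm_gen_def Let_def
  apply -
  subgoal by (elim conjE) metis
  subgoal by (elim conjE) metis
  subgoal by (elim conjE) metis
  subgoal by (elim conjE) metis
  subgoal by (elim conjE) metis
  subgoal by (elim conjE) metis
  subgoal by (elim conjE) metis
  subgoal by (elim conjE) metis
  subgoal by (elim conjE) metis
  subgoal by (elim conjE) metis
  done

lemma Ax_sound:
  assumes "Ax \<phi>" "wf ar \<phi>" "ne \<longrightarrow> nes \<phi>" "is_grm_gen ar ne M"
  shows "sat M s \<phi>"
  using assms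
proof (induction arbitrary: s rule: Ax.induct)
  case (taut \<phi>)
  then show ?case using peval_sat[of M s \<phi>] by simp
next
  case (kN \<phi> \<psi>)
  show ?case by simp
next
  case (nN \<phi>)
  show ?case by simp
next
  case (kD X \<phi> \<psi>)
  show ?case by simp
next
  case (pD p xs)
  have ok: "ne \<longrightarrow> fset_of_list xs \<noteq> {||}" using pD by simp
  have len: "length xs = ar p" using pD by simp
  show ?case
  proof (simp, intro impI allI)
    fix t assume "vP M p xs s" "eqr M (fset_of_list xs) s t"
    then show "vP M p xs t" using C5[OF pD(3) ok len] by (simp add: fset_of_list.rep_eq)
  qed
next
  case (depD X y)
  then have ok: "ne \<longrightarrow> X \<noteq> {||}" by simp
  show ?case
  proof (simp, intro impI allI)
    fix t assume "vD M X y s" "eqr M X s t"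
    moreover have "ne \<longrightarrow> {|y|} \<noteq> {||}" by simp
    ultimately have "dXY M t X {|y|} \<and> eqr M {|y|} s t"
      using C4[OF depD(3) ok, of "{|y|}" s t] by (simp only: dXY_single)
    then show "vD M X y t" by (simp only: dXY_single)
  qed
next
  case (tD X \<phi>)
  then have "equivp (eqr M X)" using C2[OF tD(3)] by simp
  then show ?case by (auto dest: equivp_reflp)
next
  case (fourD X \<phi>)
  then have "equivp (eqr M X)" using C2[OF fourD(3)] by simp
  then have tr: "\<And>a b c. eqr M X a b \<Longrightarrow> eqr M X b c \<Longrightarrow> eqr M X a c" by (rule equivp_transp)
  show ?case
  proof (simp, intro impI allI)
    fix t u assume "\<forall>t. eqr M X s t \<longrightarrow> sat M t \<phi>" "eqr M X s t" "eqr M X t u"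
    then show "sat M u \<phi>" using tr[of s t u] by blast
  qed
next
  case (fiveD X \<phi>)
  then have eq: "equivp (eqr M X)" using C2[OF fiveD(3)] by simp
  have tr: "\<And>a b c. eqr M X a b \<Longrightarrow> eqr M X b c \<Longrightarrow> eqr M X a c" using eq by (rule equivp_transp)
  have sy: "\<And>a b. eqr M X a b \<Longrightarrow> eqr M X b a" using eq by (rule equivp_symp)
  show ?case
  proof (simp, intro impI allI)
    fix t assume "\<exists>t. eqr M X s t \<and> \<not> sat M t \<phi>" "eqr M X s t"
    then obtain u where "eqr M X s u" "\<not> sat M u \<phi>" by blast
    moreover have "eqr M X t s" using sy[OF \<open>eqr M X s t\<close>] .
    ultimately show "\<exists>x. eqr M X t x \<and> \<not> sat M x \<phi>" using tr by blast
  qed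
next
  case (reflDep x X)
  then show ?case using C3a[OF reflDep(4)] by auto
next
  case (transDep ys Y zs Z X)
  show ?case
  proof (cases "zs = []")
    case True then show ?thesis by (simp add: DXY_def)
  next
    case False
    have ok: "ne \<longrightarrow> X \<noteq> {||}" "ne \<longrightarrow> Y \<noteq> {||}" "ne \<longrightarrow> Z \<noteq> {||}"
      using transDep False by (auto simp: nes_DXY)
    have e1: "sat M s (DXY X ys) = dXY M s X Y" by (rule sat_DXY[OF transDep(1)])
    have e2: "sat M s (DXY Y zs) = dXY M s Y Z" by (rule sat_DXY[OF transDep(2)])
    have e3: "sat M s (DXY X zs) = dXY M s X Z" by (rule sat_DXY[OF transDep(2)])
    show ?thesis unfolding sat_imp sat.simps e1 e2 e3 using C3b[OF transDep(5) ok] by blast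
  qed
next
  case (vNext v)
  then show ?case using C3c[OF vNext(3)] by simp
next
  case (transfer ys Y X \<phi>)
  have ok: "ne \<longrightarrow> X \<noteq> {||}" "ne \<longrightarrow> Y \<noteq> {||}"
    using transfer by (auto simp: nes_DXY)
  show ?case
  proof (simp add: sat_DXY[OF transfer(1)], intro impI allI)
    fix t assume a: "dXY M s X Y \<and> (\<forall>t. eqr M Y s t \<longrightarrow> sat M t \<phi>)" "eqr M X s t"
    then have "eqr M Y s t" using C4[OF transfer(4) ok] by blast
    then show "sat M t \<phi>" using a by blast
  qed
next
  case (emptyNext \<phi>)
  then show ?case using C1[OF emptyNext(3)] by simp
next
  case (nextPred p xs)
  then show ?case using C6[OF nextPred(3)] by simp
next
  case (nextD X \<phi>)
  then have ok: "ne \<longrightarrow> X \<noteq> {||}" by simp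
  show ?case using C7[OF nextD(3) ok] by simp
next
  case (nextDep X y)
  then have ok: "ne \<longrightarrow> X \<noteq> {||}" by simp
  show ?case using C8[OF nextDep(3) ok, of "{|y|}" s] by (simp add: dXY_single)
qed

lemma DFDg_sound:
  assumes "DFDg ar ne \<phi>" "is_grm_gen ar ne M"
  shows "sat M s \<phi>"
  using assms
proof (induction arbitrary: s rule: DFDg.induct)
  case (ax \<phi>)
  show ?case using Ax_sound[OF ax(1) ax(2) ax(3) ax(4)] .
next
  case (mp \<phi> \<psi>)
  have "sat M s (imp \<phi> \<psi>)" "sat M s \<phi>" using mp.IH mp.prems by blast+
  then show ?case by simp
next
  case (necD \<phi> X) then show ?case by simp
next
  case (necN \<phi>) then show ?case by simp
qed

theorem fact2p4:
  fixes ar :: "'p \<Rightarrow> nat"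
  shows "(\<forall>(\<phi> :: ('v::finite, 'p) fm) (M :: ('v, 'p, 'w) grm) s.
            DFD ar \<phi> \<longrightarrow> is_grm ar M \<longrightarrow> sat M s \<phi>)
       \<and> (\<forall>(\<phi> :: ('v::finite, 'p) fm) (M :: ('v, 'p, 'w) grm) s.
            DFD_ne ar \<phi> \<longrightarrow> is_grm_ne ar M \<longrightarrow> sat M s \<phi>)"
  by (auto simp: DFD_def DFD_ne_def is_grm_def is_grm_ne_def intro: DFDg_sound)

end
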